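(* Let $r\ge 0$ and $n>r+1$ be integers, $m=n-r-1$, and let $\mathbf D=\mathbf D^{(r+1)}\in\mathbb R^{m\times n}$ be the $(r+1)$-th order difference matrix. Let $r_a=\lfloor (r+1)/2\rfloor$, $r_b=\lceil (r+1)/2\rceil-1$. Let $0=\tau_0<\tau_1<\dots<\tau_J<\tau_{J+1}=m$ be integers with $\tau_1-r_b\ge 1$, $\tau_J+r_a\le m$ and $\tau_{j+1}-\tau_j\ge r+1$ for all $j$; put $A_j=\{\tau_j-r_b,\dots,\tau_j+r_a\}$ for $j=1,\dots,J$ and $\mathcal A=\bigcup_{j=1}^J A_j\subseteq\{1,\dots,m\}$. Suppose $\mathbf y=\mathbf f+\boldsymbol\varepsilon$ with $\mathbf f\in\mathbb R^n$ deterministic satisfying $[\mathbf D\mathbf f]_i=0$ for every $i\in\{1,\dots,m\}\setminus\mathcal A$, and $\boldsymbol\varepsilon\sim N(\mathbf 0,\sigma^2\mathbf I_n)$. Let $\mathbf M=(\mathbf D_{-\mathcal A}\mathbf D_{-\mathcal A}^T)^{-1}\mathbf D_{-\mathcal A}$, whose rows (and the rows/columns of $(\mathbf D_{-\mathcal A}\mathbf D_{-\mathcal A}^T)^{-1}$) are labelled by the indices in $\{1,\dots,m\}\setminus\mathcal A$. For $j=0,\dots,J$ and $t\in[(\tau_j+r_a)/m,(\tau_{j+1}-r_b)/m]$ define $$W_j(t)=(\tau_{j+1}-\tau_j-r)^{-(2r+1)/2}\,[\mathbf M]_{\lfloor mt\rfloor}\,\mathbf y\quad\text{if }\tau_j+r_a<\lfloor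 mt\rfloor<\tau_{j+1}-r_b,$$ and $W_j(t)=0$ if $\lfloor mt\rfloor\in\{\tau_j+r_a,\tau_{j+1}-r_b\}$. Then: (a) for each $j$, the process $\mathbf W_j=\{W_j(t):(\tau_j+r_a)/m\le t\le(\tau_{j+1}-r_b)/m\}$ is a Gaussian bridge process (a Gaussian process vanishing at both endpoints of its interval) with mean zero and covariance $$\mathrm{Cov}(W_j(t),W_j(t'))=\sigma^2(\tau_{j+1}-\tau_j-r)^{-(2r+1)}\big[(\mathbf D_{-\mathcal A}\mathbf D_{-\mathcal A}^T)^{-1}\big]_{\lfloor mt\rfloor,\lfloor mt'\rfloor}$$ for $t,t'$ in the interval with $\lfloor mt\rfloor,\lfloor mt'\rfloor$ strictly between $\tau_j+r_a$ and $\tau_{j+1}-r_b$; (b) for $j\neq j'$, the processes $\mathbf W_j$ and $\mathbf W_{j'}$ are independent.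
   Context: The first-order difference matrix $\mathbf D^{(1)}\in\mathbb R^{(n-1)\times n}$ has $i$-th row with $-1$ in position $i$, $+1$ in position $i+1$, and zeros elsewhere. For $r\ge1$, $\mathbf D^{(r+1)}=\mathbf D^{(1)}\mathbf D^{(r)}$, where in this product $\mathbf D^{(1)}$ denotes the $(n-r-2)\times(n-r-1)$ first-difference matrix; thus $\mathbf D^{(r+1)}$ has $n-r-1$ rows. For an index set $\mathcal I$, $\mathbf D_{\mathcal I}$ is the submatrix of rows with labels in $\mathcal I$ and $\mathbf D_{-\mathcal I}$ the submatrix of the remaining rows; $[\mathbf M]_k$ denotes the row of $\mathbf M$ labelled $k$, and $[\cdot]_{k,l}$ the entry with labels $(k,l)$. *)

theory Defs
  imports "HOL-Probability.Probability"
begin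

(* Matrices are functions nat => nat => real with 1-based row/column labels;
   the dimensions are tracked explicitly. *)

definition diff1 :: "nat \<Rightarrow> nat \<Rightarrow> real" where
  "diff1 i l = (if l = i then -1 else if l = Suc i then 1 else 0)"

(* diffmat n k = D^(k) of size (n-k) x n; D^(k+1) = D^(1) D^(k), inner dimension n-k.
   diffmat n 0 is the n x n identity, so that diffmat n 1 = D^(1) on {1..n-1} x {1..n}. *)
fun diffmat :: "nat \<Rightarrow> nat \<Rightarrow> nat \<Rightarrow> nat \<Rightarrow> real" where
  "diffmat n 0 i l = (if i = l then 1 else 0)"
| "diffmat n (Suc k) i l = (\<Sum>p\<in>{1..n-k}. diff1 i p * diffmat n k p l)"

definition r_a :: "nat \<Rightarrow> nat" where
  "r_a r = nat \<lfloor>real (r + 1) / 2\<rfloor>"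

definition r_b :: "nat \<Rightarrow> nat" where
  "r_b r = nat \<lceil>real (r + 1) / 2\<rceil> - 1"

definition Aset :: "nat \<Rightarrow> nat \<Rightarrow> (nat \<Rightarrow> nat) \<Rightarrow> nat set" where
  "Aset r J \<tau> = (\<Union>j\<in>{1..J}. {\<tau> j - r_b r .. \<tau> j + r_a r})"

definition set_inv :: "nat set \<Rightarrow> (nat \<Rightarrow> nat \<Rightarrow> real) \<Rightarrow> nat \<Rightarrow> nat \<Rightarrow> real" where
  "set_inv S G = (SOME H. (\<forall>k\<in>S. \<forall>l\<in>S. (\<Sum>p\<in>S. G k p * H p l) = (if k = l then 1 else 0))
                        \<and> (\<forall>k\<in>S. \<forall>l\<in>S. (\<Sum>p\<in>S. H k p * G p l) = (if k = l then 1 else 0))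
                        \<and> (\<forall>k l. k \<notin> S \<or> l \<notin> S \<longrightarrow> H k l = 0))"

definition gram :: "nat \<Rightarrow> (nat \<Rightarrow> nat \<Rightarrow> real) \<Rightarrow> nat \<Rightarrow> nat \<Rightarrow> real" where
  "gram n D k l = (\<Sum>i\<in>{1..n}. D k i * D l i)"

definition Ginv :: "nat \<Rightarrow> nat \<Rightarrow> nat \<Rightarrow> (nat \<Rightarrow> nat) \<Rightarrow> nat \<Rightarrow> nat \<Rightarrow> real" where
  "Ginv n r J \<tau> = set_inv ({1..n - r - 1} - Aset r J \<tau>) (gram n (diffmat n (r + 1)))"

definition Mmat :: "nat \<Rightarrow> nat \<Rightarrow> nat \<Rightarrow> (nat \<Rightarrow> nat) \<Rightarrow> nat \<Rightarrow> nat \<Rightarrow> real" where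
  "Mmat n r J \<tau> k i =
     (\<Sum>p\<in>{1..n - r - 1} - Aset r J \<tau>. Ginv n r J \<tau> k p * diffmat n (r + 1) p i)"

definition Ival :: "nat \<Rightarrow> nat \<Rightarrow> (nat \<Rightarrow> nat) \<Rightarrow> nat \<Rightarrow> real set" where
  "Ival n r \<tau> j = {real (\<tau> j + r_a r) / real (n - r - 1) .. real (\<tau> (Suc j) - r_b r) / real (n - r - 1)}"

definition Wproc :: "nat \<Rightarrow> nat \<Rightarrow> nat \<Rightarrow> (nat \<Rightarrow> nat) \<Rightarrow> (nat \<Rightarrow> real) \<Rightarrow> ('a \<Rightarrow> nat \<Rightarrow> real)
                      \<Rightarrow> nat \<Rightarrow> real \<Rightarrow> 'a \<Rightarrow> real" where
  "Wproc n r J \<tau> f \<epsilon> j t \<omega> =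
     (let m = n - r - 1; k = nat \<lfloor>real m * t\<rfloor> in
      if \<tau> j + r_a r < k \<and> k < \<tau> (Suc j) - r_b r
      then real (\<tau> (Suc j) - \<tau> j - r) powr (- (2 * real r + 1) / 2)
           * (\<Sum>i\<in>{1..n}. Mmat n r J \<tau> k i * (f i + \<epsilon> \<omega> i))
      else 0)"

definition gaussian_rv :: "'a measure \<Rightarrow> ('a \<Rightarrow> real) \<Rightarrow> bool" where
  "gaussian_rv P X \<longleftrightarrow>
     (\<exists>\<mu> s. s > 0 \<and> distributed P lborel X (normal_density \<mu> s))
     \<or> (X \<in> borel_measurable P \<and> (\<exists>c. AE \<omega> in P. X \<omega> = c))"

(* Gaussian process on index set I: all finite linear combinations are Gaussian,
   i.e. all finite-dimensional distributions are (possibly degenerate) multivariate normal *)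
definition gaussian_process :: "'a measure \<Rightarrow> 'i set \<Rightarrow> ('i \<Rightarrow> 'a \<Rightarrow> real) \<Rightarrow> bool" where
  "gaussian_process P I X \<longleftrightarrow>
     (\<forall>t\<in>I. X t \<in> borel_measurable P) \<and>
     (\<forall>S c. finite S \<longrightarrow> S \<subseteq> I \<longrightarrow> gaussian_rv P (\<lambda>\<omega>. \<Sum>t\<in>S. c t * X t \<omega>))"

end

theory Submission
  imports Defs "Jordan_Normal_Form.Determinant"
begin

lemma diff1_sum:
  assumes "1 \<le> i" "Suc i \<le> N"
  shows "(\<Sum>p\<in>{1..N}. diff1 i p * g p) = g (Suc i) - g i"
proof -
  have "\<And>p. diff1 i p * g p = (if p = Suc i then g p else 0) - (if p = i then g p else 0)"
    by (simp add: diff1_def)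
  then have "(\<Sum>p\<in>{1..N}. diff1 i p * g p) = (\<Sum>p\<in>{1..N}. (if p = Suc i then g p else 0)) - (\<Sum>p\<in>{1..N}. (if p = i then g p else 0))"
    by (simp add: sum_subtractf)
  also have "\<dots> = g (Suc i) - g i" using assms by (simp add: sum.delta)
  finally show ?thesis .
qed

lemma diffmat_supp:
  "1 \<le> i \<Longrightarrow> i + k \<le> n \<Longrightarrow> (\<forall>l. l < i \<or> i + k < l \<longrightarrow> diffmat n k i l = 0) \<and> diffmat n k i (i + k) = 1"
proof (induction k arbitrary: i)
  case 0
  then show ?case by auto
next
  case (Suc k)
  have eq: "\<And>l. diffmat n (Suc k) i l = diffmat n k (Suc i) l - diffmat n k i l"
    using Suc.prems diff1_sum[of i "n - k" "\<lambda>p. diffmat n k p l" for l] by simp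
  have A: "(\<forall>l. l < i \<or> i + k < l \<longrightarrow> diffmat n k i l = 0) \<and> diffmat n k i (i + k) = 1"
    using Suc by auto
  have B: "(\<forall>l. l < Suc i \<or> Suc i + k < l \<longrightarrow> diffmat n k (Suc i) l = 0) \<and> diffmat n k (Suc i) (Suc i + k) = 1"
    using Suc.IH[of "Suc i"] Suc.prems by auto
  show ?case unfolding eq using A B by auto
qed

lemma inv_exists:
  fixes G :: "nat \<Rightarrow> nat \<Rightarrow> real"
  assumes fin: "finite S"
    and inj: "\<And>x. \<forall>k\<in>S. (\<Sum>l\<in>S. G k l * x l) = 0 \<Longrightarrow> \<forall>l\<in>S. x l = 0"
  shows "\<exists>H. (\<forall>k\<in>S. \<forall>l\<in>S. (\<Sum>p\<in>S. G k p * H p l) = (if k = l then 1 else 0))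
                        \<and> (\<forall>k\<in>S. \<forall>l\<in>S. (\<Sum>p\<in>S. H k p * G p l) = (if k = l then 1 else 0))
                        \<and> (\<forall>k l. k \<notin> S \<or> l \<notin> S \<longrightarrow> H k l = 0)"
proof -
  define N where "N = card S"
  obtain \<phi> where bij: "bij_betw \<phi> {0..<N} S" using ex_bij_betw_nat_finite[OF fin] N_def by auto
  define \<psi> where "\<psi> = inv_into {0..<N} \<phi>"
  have \<phi>\<psi>: "\<psi> k < N \<and> \<phi> (\<psi> k) = k" if "k \<in> S" for k
    using bij that unfolding \<psi>_def bij_betw_def
    by (metis atLeastLessThan_iff f_inv_into_f inv_into_into)
  have \<psi>\<phi>: "\<psi> (\<phi> a) = a \<and> \<phi> a \<in> S" if "a < N" for a
    using bij that unfolding \<psi>_def bij_betw_def by (auto simp: inv_into_f_f)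
  have reidx: "(\<Sum>l\<in>S. g l) = (\<Sum>b\<in>{0..<N}. g (\<phi> b))" for g :: "nat \<Rightarrow> real"
    using sum.reindex_bij_betw[OF bij, of g] by simp
  define A where "A = mat N N (\<lambda>(a,b). G (\<phi> a) (\<phi> b))"
  have Ac: "A \<in> carrier_mat N N" by (simp add: A_def)
  have "det A \<noteq> 0"
  proof
    assume "det A = 0"
    then obtain v where v: "v \<in> carrier_vec N" "v \<noteq> 0\<^sub>v N" "A *\<^sub>v v = 0\<^sub>v N"
      using det_0_iff_vec_prod_zero_field[OF Ac] by auto
    define x where "x l = (if l \<in> S then v $ \<psi> l else 0)" for l
    have "\<forall>k\<in>S. (\<Sum>l\<in>S. G k l * x l) = 0"
    proof
      fix k assume k: "k \<in> S"
      have "(\<Sum>l\<in>S. G k l * x l) = (\<Sum>b\<in>{0..<N}. G k (\<phi> b) * v $ b)"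
        unfolding reidx using \<psi>\<phi> x_def by (auto intro!: sum.cong)
      also have "\<dots> = (A *\<^sub>v v) $ \<psi> k"
        using \<phi>\<psi>[OF k] v(1) by (simp add: A_def mult_mat_vec_def scalar_prod_def)
      also have "\<dots> = 0" using v(3) \<phi>\<psi>[OF k] by simp
      finally show "(\<Sum>l\<in>S. G k l * x l) = 0" .
    qed
    then have "\<forall>l\<in>S. x l = 0" by (rule inj)
    then have "\<forall>b<N. v $ b = 0" using \<psi>\<phi> x_def by force
    then have "v = 0\<^sub>v N" using v(1) by (intro eq_vecI) auto
    with v(2) show False by simp
  qed
  then have "A \<in> Units (ring_mat TYPE(real) N ())" by (rule det_non_zero_imp_unit[OF Ac])
  then obtain B where B: "B \<in> carrier_mat N N" "B * A = 1\<^sub>m N" "A * B = 1\<^sub>m N"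
    unfolding Units_def ring_mat_def by auto
  define H where "H k l = (if k \<in> S \<and> l \<in> S then B $$ (\<psi> k, \<psi> l) else 0)" for k l
  have inj\<psi>: "\<psi> k = \<psi> l \<longleftrightarrow> k = l" if "k \<in> S" "l \<in> S" for k l
    using \<phi>\<psi> that by metis
  show ?thesis
  proof (intro exI[of _ H] conjI ballI allI impI)
    fix k l assume k: "k \<in> S" and l: "l \<in> S"
    have "(\<Sum>p\<in>S. G k p * H p l) = (\<Sum>b\<in>{0..<N}. A $$ (\<psi> k, b) * B $$ (b, \<psi> l))"
      unfolding reidx using \<psi>\<phi> \<phi>\<psi>[OF k] \<phi>\<psi>[OF l] l by (auto simp: H_def A_def intro!: sum.cong)
    also have "\<dots> = (A * B) $$ (\<psi> k, \<psi> l)"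
      using B(1) \<phi>\<psi>[OF k] \<phi>\<psi>[OF l] Ac by (simp add: scalar_prod_def row_def col_def)
    also have "\<dots> = (if k = l then 1 else 0)"
      using B(3) \<phi>\<psi>[OF k] \<phi>\<psi>[OF l] inj\<psi>[OF k l] by simp
    finally show "(\<Sum>p\<in>S. G k p * H p l) = (if k = l then 1 else 0)" .
  next
    fix k l assume k: "k \<in> S" and l: "l \<in> S"
    have "(\<Sum>p\<in>S. H k p * G p l) = (\<Sum>b\<in>{0..<N}. B $$ (\<psi> k, b) * A $$ (b, \<psi> l))"
      unfolding reidx using \<psi>\<phi> \<phi>\<psi>[OF k] \<phi>\<psi>[OF l] k by (auto simp: H_def A_def intro!: sum.cong)
    also have "\<dots> = (B * A) $$ (\<psi> k, \<psi> l)"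
      using B(1) \<phi>\<psi>[OF k] \<phi>\<psi>[OF l] Ac by (simp add: scalar_prod_def row_def col_def)
    also have "\<dots> = (if k = l then 1 else 0)"
      using B(2) \<phi>\<psi>[OF k] \<phi>\<psi>[OF l] inj\<psi>[OF k l] by simp
    finally show "(\<Sum>p\<in>S. H k p * G p l) = (if k = l then 1 else 0)" .
  next
    fix k l assume "k \<notin> S \<or> l \<notin> S"
    then show "H k l = 0" by (auto simp: H_def)
  qed
qed

declare diffmat.simps[simp del]

lemma delta1: "finite A \<Longrightarrow> k \<in> A \<Longrightarrow> (\<Sum>q\<in>A. (if k = q then 1 else 0) * g q) = (g k :: real)"
  by (simp add: if_distrib[of "\<lambda>x. x * g _"] sum.delta cong: if_cong)
lemma delta2: "finite A \<Longrightarrow> k \<in> A \<Longrightarrow> (\<Sum>q\<in>A. g q * (if q = k then 1 else 0)) = (g k :: real)"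
  by (simp add: if_distrib[of "\<lambda>x. g _ * x"] sum.delta' cong: if_cong)
lemma delta3: "finite A \<Longrightarrow> k \<in> A \<Longrightarrow> (\<Sum>q\<in>A. g q * (if k = q then 1 else 0)) = (g k :: real)"
  by (simp add: if_distrib[of "\<lambda>x. g _ * x"] sum.delta cong: if_cong)

lemma rab: "r_a r + r_b r = r"
proof -
  obtain q where "r = 2*q \<or> r = 2*q+1" by (metis odd_two_times_div_two_succ even_two_times_div_two)
  then show ?thesis
  proof
    assume r: "r = 2*q"
    have "\<lfloor>real (r + 1) / 2\<rfloor> = int q" using r by (simp add: floor_eq_iff)
    moreover have "\<lceil>real (r + 1) / 2\<rceil> = int q + 1" using r by (simp add: ceiling_eq_iff)
    ultimately show ?thesis using r by (simp add: r_a_def r_b_def)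
  next
    assume r: "r = 2*q+1"
    have e: "real (r + 1) / 2 = real (q + 1)" using r by simp
    show ?thesis unfolding r_a_def r_b_def e floor_of_nat ceiling_of_nat using r by simp
  qed
qed

locale tsetting =
  fixes n r J :: nat and \<tau> :: "nat \<Rightarrow> nat" and f :: "nat \<Rightarrow> real"
  assumes nr: "n > r + 1" and t0: "\<tau> 0 = 0" and tJ: "\<tau> (J + 1) = n - r - 1"
    and mono: "\<forall>j\<le>J. \<tau> j < \<tau> (j + 1)"
    and gap: "\<forall>j\<le>J. \<tau> (j + 1) - \<tau> j \<ge> r + 1"
    and fz: "\<forall>i\<in>{1..n - r - 1} - Aset r J \<tau>. (\<Sum>l\<in>{1..n}. diffmat n (r + 1) i l * f l) = 0"
begin

abbreviation "m \<equiv> n - r - 1"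
abbreviation "D \<equiv> diffmat n (r + 1)"
abbreviation "S \<equiv> {1..m} - Aset r J \<tau>"
abbreviation "G \<equiv> gram n D"
abbreviation "H \<equiv> Ginv n r J \<tau>"
abbreviation "M \<equiv> Mmat n r J \<tau>"

definition sb :: "nat \<Rightarrow> nat \<Rightarrow> bool" where
  "sb k l \<longleftrightarrow> (\<forall>j\<in>{1..J}. (\<tau> j + r_a r < k \<longleftrightarrow> \<tau> j + r_a r < l))"

lemma D_supp:
  assumes "p \<in> {1..m}"
  shows "l < p \<or> p + r + 1 < l \<Longrightarrow> D p l = 0" and "D p (p + r + 1) = 1"
  using diffmat_supp[of p "r+1" n] assms by auto

lemma D_nz: "p \<in> {1..m} \<Longrightarrow> D p l \<noteq> 0 \<Longrightarrow> p \<le> l \<and> l \<le> p + r + 1"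
  using D_supp(1) by (meson not_le)

lemma G_sym: "G k l = G l k"
  by (simp add: gram_def mult.commute)

lemma G_zero:
  assumes "k \<in> {1..m}" "l \<in> {1..m}" "k + r + 1 < l"
  shows "G k l = 0"
  unfolding gram_def
proof (rule sum.neutral, rule ballI)
  fix i assume "i \<in> {1..n}"
  show "D k i * D l i = 0"
  proof (cases "D k i = 0")
    case False
    then have "i \<le> k + r + 1" using D_nz assms by blast
    then have "D l i = 0" using D_supp(1)[OF assms(2)] assms by auto
    then show ?thesis by simp
  qed simp
qed

lemma S_sub: "S \<subseteq> {1..m}" by auto

lemma G_inj:
  assumes x: "\<forall>k\<in>S. (\<Sum>l\<in>S. G k l * x l) = 0"
  shows "\<forall>l\<in>S. x l = 0"
proof (rule ccontr)
  define v where "v i = (\<Sum>k\<in>S. x k * D k i)" for i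
  have "0 = (\<Sum>k\<in>S. x k * (\<Sum>l\<in>S. G k l * x l))" using x by simp
  also have "\<dots> = (\<Sum>k\<in>S. \<Sum>l\<in>S. \<Sum>i\<in>{1..n}. (x k * D k i) * (x l * D l i))"
    by (simp add: gram_def sum_distrib_left sum_distrib_right mult_ac)
  also have "\<dots> = (\<Sum>k\<in>S. \<Sum>i\<in>{1..n}. \<Sum>l\<in>S. (x k * D k i) * (x l * D l i))"
    by (rule sum.cong[OF refl], rule sum.swap)
  also have "\<dots> = (\<Sum>i\<in>{1..n}. \<Sum>k\<in>S. \<Sum>l\<in>S. (x k * D k i) * (x l * D l i))"
    by (rule sum.swap)
  also have "\<dots> = (\<Sum>i\<in>{1..n}. (v i)\<^sup>2)"
    by (simp add: v_def power2_eq_square sum_product)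
  finally have "(\<Sum>i\<in>{1..n}. (v i)\<^sup>2) = 0" by simp
  then have v0: "\<forall>i\<in>{1..n}. v i = 0"
    by (simp add: sum_nonneg_eq_0_iff)
  assume "\<not> (\<forall>l\<in>S. x l = 0)"
  then have ne: "{l\<in>S. x l \<noteq> 0} \<noteq> {}" by auto
  define q where "q = Max {l\<in>S. x l \<noteq> 0}"
  have q: "q \<in> S" "x q \<noteq> 0" using Max_in[OF _ ne] q_def by auto
  have qmax: "l \<le> q" if "l \<in> S" "x l \<noteq> 0" for l
    using that q_def by (simp add: Max_ge)
  have "v (q + r + 1) = (\<Sum>k\<in>S. if k = q then x q else 0)"
    unfolding v_def
  proof (rule sum.cong[OF refl])
    fix k assume k: "k \<in> S"
    show "x k * D k (q + r + 1) = (if k = q then x q else 0)"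
    proof (cases "k = q")
      case True then show ?thesis using D_supp(2) q by auto
    next
      case False
      show ?thesis
      proof (cases "x k = 0")
        case False
        then have "k < q" using qmax k \<open>k \<noteq> q\<close> by fastforce
        then have "D k (q + r + 1) = 0" using D_supp(1) k by auto
        then show ?thesis using \<open>k \<noteq> q\<close> by simp
      qed (simp add: \<open>k \<noteq> q\<close>)
    qed
  qed
  also have "\<dots> = x q" using q by simp
  finally have "v (q + r + 1) = x q" .
  moreover have "q + r + 1 \<in> {1..n}" using q nr by auto
  ultimately show False using v0 q by auto
qed

lemma H_props:
  "(\<forall>k\<in>S. \<forall>l\<in>S. (\<Sum>p\<in>S. G k p * H p l) = (if k = l then 1 else 0))
   \<and> (\<forall>k\<in>S. \<forall>l\<in>S. (\<Sum>p\<in>S. H k p * G p l) = (if k = l then 1 else 0))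
   \<and> (\<forall>k l. k \<notin> S \<or> l \<notin> S \<longrightarrow> H k l = 0)"
proof -
  have "\<exists>H. (\<forall>k\<in>S. \<forall>l\<in>S. (\<Sum>p\<in>S. G k p * H p l) = (if k = l then 1 else 0))
                        \<and> (\<forall>k\<in>S. \<forall>l\<in>S. (\<Sum>p\<in>S. H k p * G p l) = (if k = l then 1 else 0))
                        \<and> (\<forall>k l. k \<notin> S \<or> l \<notin> S \<longrightarrow> H k l = 0)"
    by (rule inv_exists[OF _ G_inj]) auto
  then show ?thesis unfolding Ginv_def set_inv_def by (rule someI_ex)
qed

lemma GH: "k \<in> S \<Longrightarrow> l \<in> S \<Longrightarrow> (\<Sum>p\<in>S. G k p * H p l) = (if k = l then 1 else 0)"
  using H_props by blast
lemma HG: "k \<in> S \<Longrightarrow> l \<in> S \<Longrightarrow> (\<Sum>p\<in>S. H k p * G p l) = (if k = l then 1 else 0)"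
  using H_props by blast
lemma H_out: "k \<notin> S \<or> l \<notin> S \<Longrightarrow> H k l = 0"
  using H_props by blast

lemma tau_le: "j \<le> j' \<Longrightarrow> j' \<le> J + 1 \<Longrightarrow> \<tau> j \<le> \<tau> j'"
proof (induction j' rule: dec_induct)
  case (step q)
  then have "\<tau> q < \<tau> (q + 1)" using mono by auto
  then show ?case using step by simp
qed simp

lemma tau_gap: assumes "j \<le> J" shows "\<tau> j + r + 1 \<le> \<tau> (Suc j)"
proof -
  have "r + 1 \<le> \<tau> (j + 1) - \<tau> j" using gap assms by auto
  moreover have "\<tau> j < \<tau> (j + 1)" using mono assms by auto
  ultimately show ?thesis unfolding Suc_eq_plus1 by arith
qed

lemma sb_refl: "sb k k" by (simp add: sb_def)
lemma sb_sym: "sb k l \<Longrightarrow> sb l k" by (simp add: sb_def)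
lemma sb_trans: "sb k l \<Longrightarrow> sb l p \<Longrightarrow> sb k p" by (simp add: sb_def)

lemma Aset_iff: "k \<in> Aset r J \<tau> \<longleftrightarrow> (\<exists>j\<in>{1..J}. \<tau> j - r_b r \<le> k \<and> k \<le> \<tau> j + r_a r)"
  by (auto simp: Aset_def)

lemma sep:
  assumes "k \<in> S" "l \<in> S" "\<not> sb k l"
  shows "k + r + 1 < l \<or> l + r + 1 < k"
proof -
  obtain j where j: "j \<in> {1..J}" "(\<tau> j + r_a r < k) \<noteq> (\<tau> j + r_a r < l)"
    using assms(3) unfolding sb_def by blast
  have kA: "\<not> (\<tau> j - r_b r \<le> k \<and> k \<le> \<tau> j + r_a r)" using assms(1) j(1) Aset_iff by blast
  have lA: "\<not> (\<tau> j - r_b r \<le> l \<and> l \<le> \<tau> j + r_a r)" using assms(2) j(1) Aset_iff by blast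
  have "r_a r + r_b r = r" by (rule rab)
  show ?thesis
  proof (cases "\<tau> j + r_a r < l")
    case True
    then have "\<not> \<tau> j + r_a r < k" using j(2) by blast
    then have "k < \<tau> j - r_b r" using kA by arith
    then show ?thesis using True \<open>r_a r + r_b r = r\<close> by arith
  next
    case False
    then have "\<tau> j + r_a r < k" using j(2) by blast
    have "l < \<tau> j - r_b r" using lA False by arith
    then show ?thesis using \<open>\<tau> j + r_a r < k\<close> \<open>r_a r + r_b r = r\<close> by arith
  qed
qed

lemma G_sb: assumes "k \<in> S" "l \<in> S" "\<not> sb k l" shows "G k l = 0"
proof -
  have k: "k \<in> {1..m}" and l: "l \<in> {1..m}" using assms by auto
  from sep[OF assms] show ?thesis
  proof
    assume "k + r + 1 < l" then show ?thesis using G_zero[OF k l] by simp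
  next
    assume "l + r + 1 < k" then show ?thesis using G_zero[OF l k] G_sym by simp
  qed
qed

lemma H_sb:
  assumes kS: "k \<in> S" and lS: "l \<in> S" and nsb: "\<not> sb k l"
  shows "H k l = 0"
proof -
  define H' where "H' k l = (if sb k l then H k l else 0)" for k l
  have GH': "(\<Sum>p\<in>S. G k p * H' p l) = (if k = l then 1 else 0)" if k: "k \<in> S" and l: "l \<in> S" for k l
  proof -
    have "(\<Sum>p\<in>S. G k p * H' p l) = (\<Sum>p\<in>S. if sb k l then G k p * H p l else 0)"
    proof (rule sum.cong[OF refl])
      fix p assume p: "p \<in> S"
      show "G k p * H' p l = (if sb k l then G k p * H p l else 0)"
      proof (cases "sb k p")
        case True
        then have "sb p l = sb k l" using sb_trans sb_sym by blast
        then show ?thesis by (simp add: H'_def)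
      next
        case False
        then show ?thesis using G_sb[OF k p] by simp
      qed
    qed
    also have "\<dots> = (if k = l then 1 else 0)"
    proof (cases "sb k l")
      case True then show ?thesis using GH[OF k l] by simp
    next
      case False
      then have "k \<noteq> l" using sb_refl by blast
      then show ?thesis using False by simp
    qed
    finally show ?thesis .
  qed
  have "H k l = (\<Sum>p\<in>S. H k p * (if p = l then 1 else 0))"
    using lS by (simp add: delta2)
  also have "\<dots> = (\<Sum>p\<in>S. H k p * (\<Sum>q\<in>S. G p q * H' q l))"
    using GH' lS by simp
  also have "\<dots> = (\<Sum>p\<in>S. \<Sum>q\<in>S. H k p * G p q * H' q l)"
    by (simp add: sum_distrib_left mult.assoc)
  also have "\<dots> = (\<Sum>q\<in>S. \<Sum>p\<in>S. H k p * G p q * H' q l)"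
    by (rule sum.swap)
  also have "\<dots> = (\<Sum>q\<in>S. (\<Sum>p\<in>S. H k p * G p q) * H' q l)"
    by (simp add: sum_distrib_right)
  also have "\<dots> = (\<Sum>q\<in>S. (if k = q then 1 else 0) * H' q l)"
    using HG kS by simp
  also have "\<dots> = H' k l" using kS by (simp add: delta1)
  also have "\<dots> = 0" using nsb by (simp add: H'_def)
  finally show ?thesis .
qed

lemma M_f: "(\<Sum>i\<in>{1..n}. M k i * f i) = 0"
proof -
  have "(\<Sum>i\<in>{1..n}. M k i * f i) = (\<Sum>i\<in>{1..n}. \<Sum>p\<in>S. H k p * (D p i * f i))"
    by (simp add: Mmat_def sum_distrib_right mult.assoc)
  also have "\<dots> = (\<Sum>p\<in>S. \<Sum>i\<in>{1..n}. H k p * (D p i * f i))"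
    by (rule sum.swap)
  also have "\<dots> = (\<Sum>p\<in>S. H k p * (\<Sum>i\<in>{1..n}. D p i * f i))"
    by (simp add: sum_distrib_left)
  also have "\<dots> = 0" using fz by simp
  finally show ?thesis .
qed

lemma M_MT:
  assumes k: "k \<in> S" and k': "k' \<in> S"
  shows "(\<Sum>i\<in>{1..n}. M k i * M k' i) = H k k'"
proof -
  have "(\<Sum>i\<in>{1..n}. M k i * M k' i) = (\<Sum>i\<in>{1..n}. \<Sum>p\<in>S. \<Sum>q\<in>S. (H k p * H k' q) * (D p i * D q i))"
    by (simp add: Mmat_def sum_product mult_ac)
  also have "\<dots> = (\<Sum>p\<in>S. \<Sum>i\<in>{1..n}. \<Sum>q\<in>S. (H k p * H k' q) * (D p i * D q i))"
    by (rule sum.swap)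
  also have "\<dots> = (\<Sum>p\<in>S. \<Sum>q\<in>S. \<Sum>i\<in>{1..n}. (H k p * H k' q) * (D p i * D q i))"
    by (rule sum.cong[OF refl], rule sum.swap)
  also have "\<dots> = (\<Sum>p\<in>S. H k p * (\<Sum>q\<in>S. H k' q * G q p))"
    by (simp add: gram_def sum_distrib_left mult_ac)
  also have "\<dots> = (\<Sum>p\<in>S. H k p * (if k' = p then 1 else 0))"
    using HG k' by simp
  also have "\<dots> = H k k'" using k' by (simp add: delta3)
  finally show ?thesis .
qed

lemma M_supp:
  assumes k: "k \<in> S" and nz: "M k i \<noteq> 0"
  shows "\<exists>p\<in>S. sb k p \<and> p \<le> i \<and> i \<le> p + r + 1"
proof (rule ccontr)
  assume no: "\<not> ?thesis"
  have "M k i = 0" unfolding Mmat_def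
  proof (rule sum.neutral, rule ballI)
    fix p assume p: "p \<in> S"
    show "H k p * D p i = 0"
    proof (cases "sb k p")
      case True
      then have "\<not> (p \<le> i \<and> i \<le> p + r + 1)" using no p by blast
      then have "D p i = 0" using D_nz p by blast
      then show ?thesis by simp
    next
      case False then show ?thesis using H_sb[OF k p] by simp
    qed
  qed
  with nz show False by simp
qed

end


context prob_space
begin

lemma eps_basic:
  assumes sig: "\<sigma> > 0" and D: "distributed M lborel (\<lambda>\<omega>. \<epsilon> \<omega> i) (normal_density 0 \<sigma>)"
  shows "integrable M (\<lambda>\<omega>. \<epsilon> \<omega> i)" "expectation (\<lambda>\<omega>. \<epsilon> \<omega> i) = 0"
    "integrable M (\<lambda>\<omega>. \<epsilon> \<omega> i * \<epsilon> \<omega> i)" "expectation (\<lambda>\<omega>. \<epsilon> \<omega> i * \<epsilon> \<omega> i) = \<sigma>\<^sup>2"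
proof -
  have a1: "integrable lborel (\<lambda>x. normal_density 0 \<sigma> x * x)" by (rule integrable_normal_moment_nz_1) (simp add: sig)
  have iff1: "integrable lborel (\<lambda>x. normal_density 0 \<sigma> x * x) = integrable M (\<lambda>x. \<epsilon> x i)"
    by (rule distributed_integrable[OF D]) (auto simp: normal_density_nonneg)
  show i1: "integrable M (\<lambda>\<omega>. \<epsilon> \<omega> i)" using a1 iff1 by blast
  show e1: "expectation (\<lambda>\<omega>. \<epsilon> \<omega> i) = 0"
    by (rule normal_distributed_expectation[OF sig D])
  have a2: "integrable lborel (\<lambda>x. normal_density 0 \<sigma> x * (x * x))"
    using integrable_normal_moment[where k=2 and \<mu>=0 and \<sigma>=\<sigma>] sig by (simp add: power2_eq_square)
  have iff2: "integrable lborel (\<lambda>x. normal_density 0 \<sigma> x * (x * x)) = integrable M (\<lambda>x. \<epsilon> x i * \<epsilon> x i)"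
    by (rule distributed_integrable[OF D]) (auto simp: normal_density_nonneg)
  show "integrable M (\<lambda>\<omega>. \<epsilon> \<omega> i * \<epsilon> \<omega> i)" using a2 iff2 by blast
  have "variance (\<lambda>\<omega>. \<epsilon> \<omega> i) = \<sigma>\<^sup>2" by (rule normal_distributed_variance[OF sig D])
  then show "expectation (\<lambda>\<omega>. \<epsilon> \<omega> i * \<epsilon> \<omega> i) = \<sigma>\<^sup>2"
    using e1 by (simp add: power2_eq_square)
qed

lemma eps_pair:
  assumes sig: "\<sigma> > 0"
    and D: "\<forall>i\<in>I. distributed M lborel (\<lambda>\<omega>. \<epsilon> \<omega> i) (normal_density 0 \<sigma>)"
    and ind: "indep_vars (\<lambda>_. borel) (\<lambda>i \<omega>. \<epsilon> \<omega> i) I"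
    and i: "i \<in> I" and l: "l \<in> I"
  shows "integrable M (\<lambda>\<omega>. \<epsilon> \<omega> i * \<epsilon> \<omega> l)"
    "expectation (\<lambda>\<omega>. \<epsilon> \<omega> i * \<epsilon> \<omega> l) = (if i = l then \<sigma>\<^sup>2 else 0)"
proof -
  have Di: "distributed M lborel (\<lambda>\<omega>. \<epsilon> \<omega> i) (normal_density 0 \<sigma>)" using D i by auto
  have Dl: "distributed M lborel (\<lambda>\<omega>. \<epsilon> \<omega> l) (normal_density 0 \<sigma>)" using D l by auto
  have "integrable M (\<lambda>\<omega>. \<epsilon> \<omega> i * \<epsilon> \<omega> l) \<and>
        expectation (\<lambda>\<omega>. \<epsilon> \<omega> i * \<epsilon> \<omega> l) = (if i = l then \<sigma>\<^sup>2 else 0)"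
  proof (cases "i = l")
    case True
    then show ?thesis using eps_basic[of \<sigma> \<epsilon> i, OF sig Di] by simp
  next
    case False
    have "indep_var borel ((\<lambda>g. g i) \<circ> (\<lambda>\<omega>. restrict (\<lambda>i. \<epsilon> \<omega> i) {i}))
                    borel ((\<lambda>g. g l) \<circ> (\<lambda>\<omega>. restrict (\<lambda>i. \<epsilon> \<omega> i) {l}))"
      using False i l by (intro indep_var_compose[OF indep_var_restrict[OF ind]]) auto
    also have "((\<lambda>g. g i) \<circ> (\<lambda>\<omega>. restrict (\<lambda>i. \<epsilon> \<omega> i) {i})) = (\<lambda>\<omega>. \<epsilon> \<omega> i)" by auto
    also have "((\<lambda>g. g l) \<circ> (\<lambda>\<omega>. restrict (\<lambda>i. \<epsilon> \<omega> i) {l})) = (\<lambda>\<omega>. \<epsilon> \<omega> l)" by auto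
    finally have iv: "indep_var borel (\<lambda>\<omega>. \<epsilon> \<omega> i) borel (\<lambda>\<omega>. \<epsilon> \<omega> l)" .
    show ?thesis using indep_var_lebesgue_integral[OF iv] indep_var_integrable[OF iv]
        eps_basic[of \<sigma> \<epsilon> i, OF sig Di] eps_basic[of \<sigma> \<epsilon> l, OF sig Dl] False by simp
  qed
  then show "integrable M (\<lambda>\<omega>. \<epsilon> \<omega> i * \<epsilon> \<omega> l)"
    "expectation (\<lambda>\<omega>. \<epsilon> \<omega> i * \<epsilon> \<omega> l) = (if i = l then \<sigma>\<^sup>2 else 0)" by auto
qed

lemma lin_mean:
  assumes sig: "\<sigma> > 0"
    and D: "\<forall>i\<in>I. distributed M lborel (\<lambda>\<omega>. \<epsilon> \<omega> i) (normal_density 0 \<sigma>)"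
  shows "integrable M (\<lambda>\<omega>. \<Sum>i\<in>I. a i * \<epsilon> \<omega> i)" "expectation (\<lambda>\<omega>. \<Sum>i\<in>I. a i * \<epsilon> \<omega> i) = 0"
proof -
  have I: "integrable M (\<lambda>\<omega>. \<epsilon> \<omega> i)" "expectation (\<lambda>\<omega>. \<epsilon> \<omega> i) = 0" if "i \<in> I" for i
    using eps_basic[of \<sigma> \<epsilon> i] sig D that by auto
  show "integrable M (\<lambda>\<omega>. \<Sum>i\<in>I. a i * \<epsilon> \<omega> i)" using I by auto
  show "expectation (\<lambda>\<omega>. \<Sum>i\<in>I. a i * \<epsilon> \<omega> i) = 0"
    using I by (simp add: integral_sum)
qed

lemma lin_cov:
  assumes sig: "\<sigma> > 0"
    and D: "\<forall>i\<in>I. distributed M lborel (\<lambda>\<omega>. \<epsilon> \<omega> i) (normal_density 0 \<sigma>)"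
    and ind: "indep_vars (\<lambda>_. borel) (\<lambda>i \<omega>. \<epsilon> \<omega> i) I"
    and fin: "finite I"
  shows "expectation (\<lambda>\<omega>. (\<Sum>i\<in>I. a i * \<epsilon> \<omega> i) * (\<Sum>l\<in>I. b l * \<epsilon> \<omega> l)) = \<sigma>\<^sup>2 * (\<Sum>i\<in>I. a i * b i)"
proof -
  have "expectation (\<lambda>\<omega>. (\<Sum>i\<in>I. a i * \<epsilon> \<omega> i) * (\<Sum>l\<in>I. b l * \<epsilon> \<omega> l))
      = expectation (\<lambda>\<omega>. \<Sum>i\<in>I. \<Sum>l\<in>I. (a i * b l) * (\<epsilon> \<omega> i * \<epsilon> \<omega> l))"
    by (simp add: sum_product mult_ac)
  also have "\<dots> = (\<Sum>i\<in>I. \<Sum>l\<in>I. (a i * b l) * expectation (\<lambda>\<omega>. \<epsilon> \<omega> i * \<epsilon> \<omega> l))"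
    using eps_pair[OF sig D ind] by (simp add: integral_sum)
  also have "\<dots> = (\<Sum>i\<in>I. \<Sum>l\<in>I. (a i * b l) * (if i = l then \<sigma>\<^sup>2 else 0))"
    using eps_pair[OF sig D ind] by simp
  also have "\<dots> = (\<Sum>i\<in>I. a i * b i * \<sigma>\<^sup>2)"
    using fin by (simp add: if_distrib[of "\<lambda>x. _ * x"] sum.delta cong: if_cong)
  also have "\<dots> = \<sigma>\<^sup>2 * (\<Sum>i\<in>I. a i * b i)"
    by (simp add: sum_distrib_left mult_ac)
  finally show ?thesis .
qed

lemma gauss_lin:
  assumes sig: "\<sigma> > 0"
    and D: "\<forall>i\<in>I. distributed M lborel (\<lambda>\<omega>. \<epsilon> \<omega> i) (normal_density 0 \<sigma>)"
    and ind: "indep_vars (\<lambda>_. borel) (\<lambda>i \<omega>. \<epsilon> \<omega> i) I"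
    and fin: "finite I"
  shows "gaussian_rv M (\<lambda>\<omega>. \<Sum>i\<in>I. a i * \<epsilon> \<omega> i)"
proof (cases "\<forall>i\<in>I. a i = 0")
  case True
  then have eq0: "(\<lambda>\<omega>. \<Sum>i\<in>I. a i * \<epsilon> \<omega> i) = (\<lambda>\<omega>. 0)" by auto
  show ?thesis unfolding gaussian_rv_def eq0 by (intro disjI2) auto
next
  case False
  define I' where "I' = {i\<in>I. a i \<noteq> 0}"
  have ne: "I' \<noteq> {}" using False I'_def by auto
  have finI': "finite I'" using fin I'_def by auto
  have eq: "(\<lambda>\<omega>. \<Sum>i\<in>I. a i * \<epsilon> \<omega> i) = (\<lambda>\<omega>. \<Sum>i\<in>I'. a i * \<epsilon> \<omega> i)"
    by (rule ext, rule sum.mono_neutral_cong_right) (auto simp: I'_def fin)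
  have Di: "distributed M lborel (\<lambda>\<omega>. a i * \<epsilon> \<omega> i) (normal_density 0 (\<bar>a i\<bar> * \<sigma>))" if "i \<in> I'" for i
    using normal_density_affine[of "\<lambda>\<omega>. \<epsilon> \<omega> i" 0 \<sigma> "a i" 0] D that sig by (auto simp: I'_def)
  have indI': "indep_vars (\<lambda>_. borel) (\<lambda>i \<omega>. a i * \<epsilon> \<omega> i) I'"
    using indep_vars_compose2[OF indep_vars_subset[OF ind], of I' "\<lambda>i x. a i * x" "\<lambda>_. borel"]
    by (auto simp: I'_def)
  have "distributed M lborel (\<lambda>x. \<Sum>i\<in>I'. a i * \<epsilon> x i)
          (normal_density (\<Sum>i\<in>I'. 0) (sqrt (\<Sum>i\<in>I'. (\<bar>a i\<bar> * \<sigma>)\<^sup>2)))"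
    by (rule sum_indep_normal[OF finI' ne indI']) (use sig Di in \<open>auto simp: I'_def\<close>)
  moreover have "sqrt (\<Sum>i\<in>I'. (\<bar>a i\<bar> * \<sigma>)\<^sup>2) > 0"
    using sig ne finI' by (auto intro!: sum_pos simp: I'_def)
  ultimately show ?thesis unfolding gaussian_rv_def eq by auto
qed

end


context tsetting
begin

definition R where "R j k \<longleftrightarrow> \<tau> j + r_a r < k \<and> k < \<tau> (Suc j) - r_b r"
definition cc where "cc j = real (\<tau> (Suc j) - \<tau> j - r) powr (- (2 * real r + 1) / 2)"
definition kk where "kk t = nat \<lfloor>real m * t\<rfloor>"
definition coef where "coef j t i = (if R j (kk t) then cc j * M (kk t) i else 0)"
definition C where "C j = {i\<in>{1..n}. \<exists>k p. R j k \<and> p \<in> S \<and> sb k p \<and> p \<le> i \<and> i \<le> p + r + 1}"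

lemma W_eq: "Wproc n r J \<tau> f \<epsilon> j t \<omega> = (\<Sum>i\<in>{1..n}. coef j t i * \<epsilon> \<omega> i)"
proof (cases "R j (kk t)")
  case True
  have "(\<Sum>i\<in>{1..n}. M (kk t) i * (f i + \<epsilon> \<omega> i)) = (\<Sum>i\<in>{1..n}. M (kk t) i * f i) + (\<Sum>i\<in>{1..n}. M (kk t) i * \<epsilon> \<omega> i)"
    by (simp add: distrib_left sum.distrib)
  also have "\<dots> = (\<Sum>i\<in>{1..n}. M (kk t) i * \<epsilon> \<omega> i)" using M_f by simp
  finally have e: "(\<Sum>i\<in>{1..n}. M (kk t) i * (f i + \<epsilon> \<omega> i)) = (\<Sum>i\<in>{1..n}. M (kk t) i * \<epsilon> \<omega> i)" .
  have "Wproc n r J \<tau> f \<epsilon> j t \<omega> = cc j * (\<Sum>i\<in>{1..n}. M (kk t) i * (f i + \<epsilon> \<omega> i))"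
    using True unfolding Wproc_def Let_def by (simp add: R_def kk_def cc_def)
  also have "\<dots> = cc j * (\<Sum>i\<in>{1..n}. M (kk t) i * \<epsilon> \<omega> i)" by (simp only: e)
  also have "\<dots> = (\<Sum>i\<in>{1..n}. coef j t i * \<epsilon> \<omega> i)"
    using True by (simp add: coef_def sum_distrib_left mult.assoc)
  finally show ?thesis .
next
  case False
  have F: "\<not> (\<tau> j + r_a r < nat \<lfloor>real m * t\<rfloor> \<and> nat \<lfloor>real m * t\<rfloor> < \<tau> (Suc j) - r_b r)"
    using False by (simp add: R_def kk_def)
  have "Wproc n r J \<tau> f \<epsilon> j t \<omega> = 0" unfolding Wproc_def Let_def using F by (simp only: if_False)
  moreover have "(\<Sum>i\<in>{1..n}. coef j t i * \<epsilon> \<omega> i) = 0" unfolding coef_def using False by simp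
  ultimately show ?thesis by simp
qed

lemma R_S: assumes "j \<le> J" "R j k" shows "k \<in> S"
proof -
  have k1: "\<tau> j + r_a r < k" "k < \<tau> (Suc j) - r_b r" using assms(2) R_def by auto
  have "\<tau> (Suc j) \<le> m" using tau_le[of "Suc j" "J+1"] tJ assms(1) by simp
  then have km: "k \<in> {1..m}" using k1 by auto
  have "k \<notin> Aset r J \<tau>"
  proof
    assume "k \<in> Aset r J \<tau>"
    then obtain j'' where j'': "j'' \<in> {1..J}" "\<tau> j'' - r_b r \<le> k" "k \<le> \<tau> j'' + r_a r"
      using Aset_iff by blast
    show False
    proof (cases "j'' \<le> j")
      case True
      then have "\<tau> j'' \<le> \<tau> j" using tau_le assms(1) by simp
      then show False using j'' k1 by simp
    next
      case False
      then have "\<tau> (Suc j) \<le> \<tau> j''" using tau_le j'' by simp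
      then show False using j'' k1 by arith
    qed
  qed
  then show ?thesis using km by simp
qed

lemma R_sep: assumes "j' \<le> J" "j < j'" "R j k" "R j' k'" shows "\<not> sb k k'"
proof -
  have "\<tau> (Suc j) \<le> \<tau> j'" using tau_le[of "Suc j" j'] assms by simp
  then have "\<not> (\<tau> (Suc j) + r_a r < k)" "\<tau> (Suc j) + r_a r < k'"
    using assms(3,4) unfolding R_def by arith+
  moreover have "Suc j \<in> {1..J}" using assms by simp
  ultimately show ?thesis unfolding sb_def by blast
qed

lemma R_sep': assumes "j \<le> J" "j' \<le> J" "j \<noteq> j'" "R j k" "R j' k'" shows "\<not> sb k k'"
proof (cases "j < j'")
  case True then show ?thesis using R_sep assms by blast
next
  case False then have "j' < j" using assms by simp
  then show ?thesis using R_sep[of j j' k' k] assms sb_sym by blast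
qed

lemma C_disj: assumes "j \<le> J" "j' \<le> J" "j \<noteq> j'" shows "C j \<inter> C j' = {}"
proof (rule ccontr)
  assume "C j \<inter> C j' \<noteq> {}"
  then obtain i k p k' p' where h: "R j k" "p \<in> S" "sb k p" "p \<le> i" "i \<le> p + r + 1"
     "R j' k'" "p' \<in> S" "sb k' p'" "p' \<le> i" "i \<le> p' + r + 1"
    unfolding C_def by blast
  have "sb p p'"
  proof (rule ccontr)
    assume "\<not> sb p p'"
    from sep[OF h(2) h(7) this] h show False by arith
  qed
  then have "sb k k'" using h sb_trans sb_sym by blast
  then show False using R_sep'[OF assms h(1) h(6)] by blast
qed

lemma C_sub: "C j \<subseteq> {1..n}" by (auto simp: C_def)

lemma coef_C: assumes "j \<le> J" "i \<in> {1..n}" "coef j t i \<noteq> 0" shows "i \<in> C j"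
proof -
  have R: "R j (kk t)" and nz: "M (kk t) i \<noteq> 0" using assms(3) by (auto simp: coef_def split: if_splits)
  have "kk t \<in> S" using R_S[OF assms(1) R] .
  then obtain p where "p \<in> S" "sb (kk t) p" "p \<le> i" "i \<le> p + r + 1" using M_supp nz by blast
  then show ?thesis using R assms(2) unfolding C_def by blast
qed

lemma W_C: assumes "j \<le> J" shows "Wproc n r J \<tau> f \<epsilon> j t \<omega> = (\<Sum>i\<in>C j. coef j t i * \<epsilon> \<omega> i)"
  unfolding W_eq
proof (rule sum.mono_neutral_right)
  show "\<forall>i\<in>{1..n} - C j. coef j t i * \<epsilon> \<omega> i = 0"
  proof
    fix i assume "i \<in> {1..n} - C j"
    then have "coef j t i = 0" using coef_C[OF assms] by blast
    then show "coef j t i * \<epsilon> \<omega> i = 0" by simp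
  qed
qed (use C_sub in auto)

lemma cc_sq: "j \<le> J \<Longrightarrow> cc j * cc j = real (\<tau> (j + 1) - \<tau> j - r) powr (- (2 * real r + 1))"
  unfolding cc_def by (simp add: powr_add[symmetric])

lemma kk_frac: "kk (real x / real m) = x"
  using nr by (simp add: kk_def)

end

theorem theorem1:
  fixes P :: "'a measure" and n r J :: nat and \<tau> :: "nat \<Rightarrow> nat"
    and f :: "nat \<Rightarrow> real" and \<epsilon> :: "'a \<Rightarrow> nat \<Rightarrow> real" and \<sigma> :: real
  assumes "prob_space P"
    and "n > r + 1"
    and "\<tau> 0 = 0" and "\<tau> (J + 1) = n - r - 1"
    and "\<forall>j\<le>J. \<tau> j < \<tau> (j + 1)"
    and "\<tau> 1 \<ge> r_b r + 1" and "\<tau> J + r_a r \<le> n - r - 1"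
    and "\<forall>j\<le>J. \<tau> (j + 1) - \<tau> j \<ge> r + 1"
    and "\<forall>i\<in>{1..n - r - 1} - Aset r J \<tau>. (\<Sum>l\<in>{1..n}. diffmat n (r + 1) i l * f l) = 0"
    and "\<sigma> > 0"
    and "\<forall>i\<in>{1..n}. distributed P lborel (\<lambda>\<omega>. \<epsilon> \<omega> i) (normal_density 0 \<sigma>)"
    and "prob_space.indep_vars P (\<lambda>_. borel) (\<lambda>i \<omega>. \<epsilon> \<omega> i) {1..n}"
  shows
    "(\<forall>j\<le>J.
        gaussian_process P (Ival n r \<tau> j) (Wproc n r J \<tau> f \<epsilon> j)
      \<and> (\<forall>t\<in>Ival n r \<tau> j. integral\<^sup>L P (Wproc n r J \<tau> f \<epsilon> j t) = 0)
      \<and> (\<forall>\<omega>. Wproc n r J \<tau> f \<epsilon> j (real (\<tau> j + r_a r) / real (n - r - 1)) \<omega> = 0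
              \<and> Wproc n r J \<tau> f \<epsilon> j (real (\<tau> (j + 1) - r_b r) / real (n - r - 1)) \<omega> = 0)
      \<and> (\<forall>t\<in>Ival n r \<tau> j. \<forall>t'\<in>Ival n r \<tau> j.
           (let k = nat \<lfloor>real (n - r - 1) * t\<rfloor>; k' = nat \<lfloor>real (n - r - 1) * t'\<rfloor> in
            \<tau> j + r_a r < k \<and> k < \<tau> (j + 1) - r_b r \<and>
            \<tau> j + r_a r < k' \<and> k' < \<tau> (j + 1) - r_b r \<longrightarrow>
            integral\<^sup>L P (\<lambda>\<omega>. (Wproc n r J \<tau> f \<epsilon> j t \<omega> - integral\<^sup>L P (Wproc n r J \<tau> f \<epsilon> j t))
                             * (Wproc n r J \<tau> f \<epsilon> j t' \<omega> - integral\<^sup>L P (Wproc n r J \<tau> f \<epsilon> j t')))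
            = \<sigma>\<^sup>2 * real (\<tau> (j + 1) - \<tau> j - r) powr (- (2 * real r + 1))
                 * Ginv n r J \<tau> k k')))
     \<and> (\<forall>j\<le>J. \<forall>j'\<le>J. j \<noteq> j' \<longrightarrow>
          prob_space.indep_var P
            (Pi\<^sub>M (Ival n r \<tau> j) (\<lambda>_. borel)) (\<lambda>\<omega>. restrict (\<lambda>t. Wproc n r J \<tau> f \<epsilon> j t \<omega>) (Ival n r \<tau> j))
            (Pi\<^sub>M (Ival n r \<tau> j') (\<lambda>_. borel)) (\<lambda>\<omega>. restrict (\<lambda>t. Wproc n r J \<tau> f \<epsilon> j' t \<omega>) (Ival n r \<tau> j')))"
proof -
  interpret tsetting n r J \<tau> f using assms(2-5,8,9) by unfold_locales auto
  interpret P: prob_space P by (rule assms(1))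
  note sig = assms(10) and Dd = assms(11) and ind = assms(12)
  have meas: "\<And>i. i \<in> {1..n} \<Longrightarrow> (\<lambda>\<omega>. \<epsilon> \<omega> i) \<in> borel_measurable P"
    using ind unfolding P.indep_vars_def by auto
  have Wfun: "Wproc n r J \<tau> f \<epsilon> j t = (\<lambda>\<omega>. \<Sum>i\<in>{1..n}. coef j t i * \<epsilon> \<omega> i)" for j t
    by (rule ext, rule W_eq)
  have Wmeas: "Wproc n r J \<tau> f \<epsilon> j t \<in> borel_measurable P" for j t
    unfolding Wfun using meas by auto
  have Wmean: "integral\<^sup>L P (Wproc n r J \<tau> f \<epsilon> j t) = 0" for j t
    unfolding Wfun by (rule P.lin_mean(2)[OF sig Dd])
  have mpos: "real (n - r - 1) \<noteq> 0" using assms(2) by simp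
  have partA: "gaussian_process P (Ival n r \<tau> j) (Wproc n r J \<tau> f \<epsilon> j)
      \<and> (\<forall>t\<in>Ival n r \<tau> j. integral\<^sup>L P (Wproc n r J \<tau> f \<epsilon> j t) = 0)
      \<and> (\<forall>\<omega>. Wproc n r J \<tau> f \<epsilon> j (real (\<tau> j + r_a r) / real (n - r - 1)) \<omega> = 0
              \<and> Wproc n r J \<tau> f \<epsilon> j (real (\<tau> (j + 1) - r_b r) / real (n - r - 1)) \<omega> = 0)
      \<and> (\<forall>t\<in>Ival n r \<tau> j. \<forall>t'\<in>Ival n r \<tau> j.
           (let k = nat \<lfloor>real (n - r - 1) * t\<rfloor>; k' = nat \<lfloor>real (n - r - 1) * t'\<rfloor> in
            \<tau> j + r_a r < k \<and> k < \<tau> (j + 1) - r_b r \<and>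
            \<tau> j + r_a r < k' \<and> k' < \<tau> (j + 1) - r_b r \<longrightarrow>
            integral\<^sup>L P (\<lambda>\<omega>. (Wproc n r J \<tau> f \<epsilon> j t \<omega> - integral\<^sup>L P (Wproc n r J \<tau> f \<epsilon> j t))
                             * (Wproc n r J \<tau> f \<epsilon> j t' \<omega> - integral\<^sup>L P (Wproc n r J \<tau> f \<epsilon> j t')))
            = \<sigma>\<^sup>2 * real (\<tau> (j + 1) - \<tau> j - r) powr (- (2 * real r + 1))
                 * Ginv n r J \<tau> k k'))" if j: "j \<le> J" for j
  proof -
    have a1: "gaussian_process P (Ival n r \<tau> j) (Wproc n r J \<tau> f \<epsilon> j)"
      unfolding gaussian_process_def
    proof (intro conjI ballI allI impI)
      fix t show "Wproc n r J \<tau> f \<epsilon> j t \<in> borel_measurable P" by (rule Wmeas)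
    next
      fix T :: "real set" and c :: "real \<Rightarrow> real"
      assume "finite T"
      have "(\<lambda>\<omega>. \<Sum>t\<in>T. c t * Wproc n r J \<tau> f \<epsilon> j t \<omega>)
          = (\<lambda>\<omega>. \<Sum>i\<in>{1..n}. (\<Sum>t\<in>T. c t * coef j t i) * \<epsilon> \<omega> i)"
      proof (rule ext)
        fix \<omega>
        have "(\<Sum>t\<in>T. c t * Wproc n r J \<tau> f \<epsilon> j t \<omega>) = (\<Sum>t\<in>T. \<Sum>i\<in>{1..n}. c t * coef j t i * \<epsilon> \<omega> i)"
          by (simp add: W_eq sum_distrib_left mult.assoc)
        also have "\<dots> = (\<Sum>i\<in>{1..n}. \<Sum>t\<in>T. c t * coef j t i * \<epsilon> \<omega> i)"
          by (rule sum.swap)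
        also have "\<dots> = (\<Sum>i\<in>{1..n}. (\<Sum>t\<in>T. c t * coef j t i) * \<epsilon> \<omega> i)"
          by (simp add: sum_distrib_right)
        finally show "(\<Sum>t\<in>T. c t * Wproc n r J \<tau> f \<epsilon> j t \<omega>) = (\<Sum>i\<in>{1..n}. (\<Sum>t\<in>T. c t * coef j t i) * \<epsilon> \<omega> i)" .
      qed
      then show "gaussian_rv P (\<lambda>\<omega>. \<Sum>t\<in>T. c t * Wproc n r J \<tau> f \<epsilon> j t \<omega>)"
        using P.gauss_lin[OF sig Dd ind] by simp
    qed
    have a2: "\<forall>t\<in>Ival n r \<tau> j. integral\<^sup>L P (Wproc n r J \<tau> f \<epsilon> j t) = 0" using Wmean by blast
    have a3: "\<forall>\<omega>. Wproc n r J \<tau> f \<epsilon> j (real (\<tau> j + r_a r) / real (n - r - 1)) \<omega> = 0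
              \<and> Wproc n r J \<tau> f \<epsilon> j (real (\<tau> (j + 1) - r_b r) / real (n - r - 1)) \<omega> = 0"
      by (simp add: Wproc_def Let_def mpos nat_int_add)
    have a4: "let k = nat \<lfloor>real (n - r - 1) * t\<rfloor>; k' = nat \<lfloor>real (n - r - 1) * t'\<rfloor> in
            \<tau> j + r_a r < k \<and> k < \<tau> (j + 1) - r_b r \<and>
            \<tau> j + r_a r < k' \<and> k' < \<tau> (j + 1) - r_b r \<longrightarrow>
            integral\<^sup>L P (\<lambda>\<omega>. (Wproc n r J \<tau> f \<epsilon> j t \<omega> - integral\<^sup>L P (Wproc n r J \<tau> f \<epsilon> j t))
                             * (Wproc n r J \<tau> f \<epsilon> j t' \<omega> - integral\<^sup>L P (Wproc n r J \<tau> f \<epsilon> j t')))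
            = \<sigma>\<^sup>2 * real (\<tau> (j + 1) - \<tau> j - r) powr (- (2 * real r + 1))
                 * Ginv n r J \<tau> k k'" for t t'
        unfolding Let_def
      proof (intro impI)
        assume h: "\<tau> j + r_a r < nat \<lfloor>real (n - r - 1) * t\<rfloor> \<and> nat \<lfloor>real (n - r - 1) * t\<rfloor> < \<tau> (j + 1) - r_b r \<and>
            \<tau> j + r_a r < nat \<lfloor>real (n - r - 1) * t'\<rfloor> \<and> nat \<lfloor>real (n - r - 1) * t'\<rfloor> < \<tau> (j + 1) - r_b r"
        have R1: "R j (kk t)" and R2: "R j (kk t')" using h by (auto simp: R_def kk_def)
        have S1: "kk t \<in> S" and S2: "kk t' \<in> S" using R_S[OF j R1] R_S[OF j R2] by auto
        have c1: "coef j t i = cc j * M (kk t) i" for i using R1 by (simp add: coef_def)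
        have c2: "coef j t' i = cc j * M (kk t') i" for i using R2 by (simp add: coef_def)
        have "integral\<^sup>L P (\<lambda>\<omega>. (Wproc n r J \<tau> f \<epsilon> j t \<omega> - integral\<^sup>L P (Wproc n r J \<tau> f \<epsilon> j t))
                             * (Wproc n r J \<tau> f \<epsilon> j t' \<omega> - integral\<^sup>L P (Wproc n r J \<tau> f \<epsilon> j t')))
            = integral\<^sup>L P (\<lambda>\<omega>. (\<Sum>i\<in>{1..n}. coef j t i * \<epsilon> \<omega> i) * (\<Sum>l\<in>{1..n}. coef j t' l * \<epsilon> \<omega> l))"
          unfolding Wmean by (simp add: W_eq)
        also have "\<dots> = \<sigma>\<^sup>2 * (\<Sum>i\<in>{1..n}. coef j t i * coef j t' i)"
          by (rule P.lin_cov[OF sig Dd ind]) simp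
        also have "\<dots> = \<sigma>\<^sup>2 * ((cc j * cc j) * (\<Sum>i\<in>{1..n}. M (kk t) i * M (kk t') i))"
          by (simp add: c1 c2 sum_distrib_left mult_ac)
        also have "\<dots> = \<sigma>\<^sup>2 * real (\<tau> (j + 1) - \<tau> j - r) powr (- (2 * real r + 1)) * Ginv n r J \<tau> (kk t) (kk t')"
          using M_MT[OF S1 S2] cc_sq[OF j] by simp
        finally show "integral\<^sup>L P (\<lambda>\<omega>. (Wproc n r J \<tau> f \<epsilon> j t \<omega> - integral\<^sup>L P (Wproc n r J \<tau> f \<epsilon> j t))
                             * (Wproc n r J \<tau> f \<epsilon> j t' \<omega> - integral\<^sup>L P (Wproc n r J \<tau> f \<epsilon> j t')))
            = \<sigma>\<^sup>2 * real (\<tau> (j + 1) - \<tau> j - r) powr (- (2 * real r + 1))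
                 * Ginv n r J \<tau> (nat \<lfloor>real (n - r - 1) * t\<rfloor>) (nat \<lfloor>real (n - r - 1) * t'\<rfloor>)"
          by (simp add: kk_def)
      qed
    show ?thesis using a1 a2 a3 a4 by blast
  qed
  define h where "h j x = restrict (\<lambda>t. \<Sum>i\<in>C j. coef j t i * x i) (Ival n r \<tau> j)" for j and x :: "nat \<Rightarrow> real"
  have hm: "h j \<in> measurable (Pi\<^sub>M (C j) (\<lambda>_. borel)) (Pi\<^sub>M (Ival n r \<tau> j) (\<lambda>_. borel))" for j
    unfolding h_def
    by (auto intro!: measurable_restrict borel_measurable_sum borel_measurable_times measurable_component_singleton)
  have heq: "h j \<circ> (\<lambda>\<omega>. restrict (\<lambda>i. \<epsilon> \<omega> i) (C j)) = (\<lambda>\<omega>. restrict (\<lambda>t. Wproc n r J \<tau> f \<epsilon> j t \<omega>) (Ival n r \<tau> j))"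
    if j: "j \<le> J" for j
  proof (rule ext)
    fix \<omega>
    show "(h j \<circ> (\<lambda>\<omega>. restrict (\<lambda>i. \<epsilon> \<omega> i) (C j))) \<omega> = restrict (\<lambda>t. Wproc n r J \<tau> f \<epsilon> j t \<omega>) (Ival n r \<tau> j)"
      unfolding h_def comp_def by (rule restrict_ext) (simp add: W_C[OF j])
  qed
  have partB: "P.indep_var
            (Pi\<^sub>M (Ival n r \<tau> j) (\<lambda>_. borel)) (\<lambda>\<omega>. restrict (\<lambda>t. Wproc n r J \<tau> f \<epsilon> j t \<omega>) (Ival n r \<tau> j))
            (Pi\<^sub>M (Ival n r \<tau> j') (\<lambda>_. borel)) (\<lambda>\<omega>. restrict (\<lambda>t. Wproc n r J \<tau> f \<epsilon> j' t \<omega>) (Ival n r \<tau> j'))"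
    if j: "j \<le> J" and j': "j' \<le> J" and jj: "j \<noteq> j'" for j j'
  proof -
    have iv: "P.indep_var (Pi\<^sub>M (C j) (\<lambda>_. borel)) (\<lambda>\<omega>. restrict (\<lambda>i. \<epsilon> \<omega> i) (C j))
                 (Pi\<^sub>M (C j') (\<lambda>_. borel)) (\<lambda>\<omega>. restrict (\<lambda>i. \<epsilon> \<omega> i) (C j'))"
      by (rule P.indep_var_restrict[OF ind C_disj[OF j j' jj] C_sub C_sub])
    have "P.indep_var (Pi\<^sub>M (Ival n r \<tau> j) (\<lambda>_. borel)) (h j \<circ> (\<lambda>\<omega>. restrict (\<lambda>i. \<epsilon> \<omega> i) (C j)))
            (Pi\<^sub>M (Ival n r \<tau> j') (\<lambda>_. borel)) (h j' \<circ> (\<lambda>\<omega>. restrict (\<lambda>i. \<epsilon> \<omega> i) (C j')))"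
      by (rule P.indep_var_compose[OF iv hm hm])
    then show ?thesis unfolding heq[OF j] heq[OF j'] .
  qed
  show ?thesis using partA partB by blast
qed

end
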